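(* Let $G=*_C G_i$ be an amalgamated free product, $n\ge1$, and $t_1,\dots,t_n,g_1,\dots,g_n\in G$. If the tuple $((t_1,g_1),\dots,(t_n,g_n))$ is tamed, then $$l(t_1^{g_1}t_2^{g_2}\cdots t_n^{g_n})\ge l(g_1)+n+l(g_n).$$
   Context: Notation $x^y=y^{-1}xy$. Every $g\in G=*_C G_i$ can be written $g=cx_1\cdots x_n$ with $c\in C$, $x_j\in G_{i_j}\setminus C$ and $i_j\neq i_{j+1}$; $n$ is determined by $g$ and called the length $l(g)$ (so $l(g)=0$ iff $g\in C$). A product $h_1\cdots h_k$ (i.e. the tuple $(h_1,\dots,h_k)$) is reduced if $l(h_1\cdots h_k)=l(h_1)+\cdots+l(h_k)$. If $h=h'h''$ with the product $h'h''$ reduced, $h'$ is a left factor and $h''$ a right factor of $h$. Set $g_0=g_{n+1}=t_0=t_{n+1}=1$. For $1\le i\le n$, $t_i$ is cancellable if at least one of: (1) $R g_i^{-1}t_i\in C$ for some right factor $R$ of $g_{i-1}$; (2) $t_ig_iL\in C$ for some left factor $L$ of $g_{i+1}^{-1}$; (3) $R\,g_i^{-1}t_ig_i\,L\in C$ for some right factor $R$ of $g_{i-1}$ and some left factor $L$ of $g_{i+1}^{-1}$. The tuple $((t_1,g_1),\dots,(t_n,g_n))$ is tamed if: (a) for each $i$, $l(t_i)=1$ and the product $g_i^{-1}t_ig_i$ (tuple $(g_i^{-1},t_i,g_i)$) is reduced; (b) for $1\le i\le n-1$, if $l(g_ig_{i+1}^{-1})=0$ then $l(t_it_{i+1})=2$;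 (c) no $t_i$ is cancellable. *)

theory Defs
  imports "HOL-Algebra.Algebra"
begin

text \<open>Amalgamated free products, presented internally: a group G with a family of
subgroups H i (i in I), all containing a common subgroup C, pairwise meeting in C,
generating G, and satisfying the normal form theorem (no nonempty alternating
product of elements of H i - C lies in C).\<close>

definition alt_word :: "('a,'b) monoid_scheme \<Rightarrow> 'i set \<Rightarrow> ('i \<Rightarrow> 'a set) \<Rightarrow> 'a set
    \<Rightarrow> ('i \<times> 'a) list \<Rightarrow> bool" where
  "alt_word G I H C ws \<longleftrightarrow>
     (\<forall>p\<in>set ws. fst p \<in> I \<and> snd p \<in> H (fst p) - C) \<and>
     (\<forall>k. Suc k < length ws \<longrightarrow> fst (ws ! k) \<noteq> fst (ws ! Suc k))"

definition word_prod :: "('a,'b) monoid_scheme \<Rightarrow> ('i \<times> 'a) list \<Rightarrow> 'a" where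
  "word_prod G ws = foldr (\<lambda>p acc. snd p \<otimes>\<^bsub>G\<^esub> acc) ws \<one>\<^bsub>G\<^esub>"

definition amalg_free_product :: "('a,'b) monoid_scheme \<Rightarrow> 'i set \<Rightarrow> ('i \<Rightarrow> 'a set) \<Rightarrow> 'a set \<Rightarrow> bool" where
  "amalg_free_product G I H C \<longleftrightarrow>
     group G \<and> subgroup C G \<and>
     (\<forall>i\<in>I. subgroup (H i) G \<and> C \<subseteq> H i) \<and>
     (\<forall>i\<in>I. \<forall>j\<in>I. i \<noteq> j \<longrightarrow> H i \<inter> H j = C) \<and>
     generate G (\<Union>i\<in>I. H i) = carrier G \<and>
     (\<forall>ws. ws \<noteq> [] \<and> alt_word G I H C ws \<longrightarrow> word_prod G ws \<notin> C)"

text \<open>Length l(g): the n in a normal form g = c x_1 ... x_n (determined by g).\<close>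
definition amalg_len :: "('a,'b) monoid_scheme \<Rightarrow> 'i set \<Rightarrow> ('i \<Rightarrow> 'a set) \<Rightarrow> 'a set \<Rightarrow> 'a \<Rightarrow> nat" where
  "amalg_len G I H C g = (LEAST n. \<exists>c\<in>C. \<exists>ws. alt_word G I H C ws \<and> length ws = n \<and>
       g = c \<otimes>\<^bsub>G\<^esub> word_prod G ws)"

definition left_factor :: "('a,'b) monoid_scheme \<Rightarrow> 'i set \<Rightarrow> ('i \<Rightarrow> 'a set) \<Rightarrow> 'a set \<Rightarrow> 'a \<Rightarrow> 'a \<Rightarrow> bool" where
  "left_factor G I H C h' h \<longleftrightarrow> h' \<in> carrier G \<and> (\<exists>h''\<in>carrier G. h = h' \<otimes>\<^bsub>G\<^esub> h'' \<and>
     amalg_len G I H C h = amalg_len G I H C h' + amalg_len G I H C h'')"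

definition right_factor :: "('a,'b) monoid_scheme \<Rightarrow> 'i set \<Rightarrow> ('i \<Rightarrow> 'a set) \<Rightarrow> 'a set \<Rightarrow> 'a \<Rightarrow> 'a \<Rightarrow> bool" where
  "right_factor G I H C h'' h \<longleftrightarrow> h'' \<in> carrier G \<and> (\<exists>h'\<in>carrier G. h = h' \<otimes>\<^bsub>G\<^esub> h'' \<and>
     amalg_len G I H C h = amalg_len G I H C h' + amalg_len G I H C h'')"

definition ext_seq :: "('a,'b) monoid_scheme \<Rightarrow> nat \<Rightarrow> (nat \<Rightarrow> 'a) \<Rightarrow> nat \<Rightarrow> 'a" where
  "ext_seq G n g k = (if 1 \<le> k \<and> k \<le> n then g k else \<one>\<^bsub>G\<^esub>)"

definition cancellable :: "('a,'b) monoid_scheme \<Rightarrow> 'i set \<Rightarrow> ('i \<Rightarrow> 'a set) \<Rightarrow> 'a set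
    \<Rightarrow> nat \<Rightarrow> (nat \<Rightarrow> 'a) \<Rightarrow> (nat \<Rightarrow> 'a) \<Rightarrow> nat \<Rightarrow> bool" where
  "cancellable G I H C n t g i \<longleftrightarrow>
    (let gi = ext_seq G n g i; ti = ext_seq G n t i;
         gp = ext_seq G n g (i - 1); gs = ext_seq G n g (i + 1) in
     (\<exists>R. right_factor G I H C R gp \<and> R \<otimes>\<^bsub>G\<^esub> inv\<^bsub>G\<^esub> gi \<otimes>\<^bsub>G\<^esub> ti \<in> C) \<or>
     (\<exists>L. left_factor G I H C L (inv\<^bsub>G\<^esub> gs) \<and> ti \<otimes>\<^bsub>G\<^esub> gi \<otimes>\<^bsub>G\<^esub> L \<in> C) \<or>
     (\<exists>R L. right_factor G I H C R gp \<and> left_factor G I H C L (inv\<^bsub>G\<^esub> gs) \<and>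
        R \<otimes>\<^bsub>G\<^esub> inv\<^bsub>G\<^esub> gi \<otimes>\<^bsub>G\<^esub> ti \<otimes>\<^bsub>G\<^esub> gi \<otimes>\<^bsub>G\<^esub> L \<in> C))"

definition tamed :: "('a,'b) monoid_scheme \<Rightarrow> 'i set \<Rightarrow> ('i \<Rightarrow> 'a set) \<Rightarrow> 'a set
    \<Rightarrow> nat \<Rightarrow> (nat \<Rightarrow> 'a) \<Rightarrow> (nat \<Rightarrow> 'a) \<Rightarrow> bool" where
  "tamed G I H C n t g \<longleftrightarrow>
    (\<forall>i\<in>{1..n}. amalg_len G I H C (t i) = 1 \<and>
        amalg_len G I H C (inv\<^bsub>G\<^esub> g i \<otimes>\<^bsub>G\<^esub> t i \<otimes>\<^bsub>G\<^esub> g i) =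
        amalg_len G I H C (inv\<^bsub>G\<^esub> g i) + amalg_len G I H C (t i) + amalg_len G I H C (g i)) \<and>
    (\<forall>i\<in>{1..<n}. amalg_len G I H C (g i \<otimes>\<^bsub>G\<^esub> inv\<^bsub>G\<^esub> g (i + 1)) = 0 \<longrightarrow>
        amalg_len G I H C (t i \<otimes>\<^bsub>G\<^esub> t (i + 1)) = 2) \<and>
    (\<forall>i\<in>{1..n}. \<not> cancellable G I H C n t g i)"

text \<open>The product t_1^{g_1} ... t_n^{g_n}, where x^y = y^{-1} x y.\<close>
definition conj_prod :: "('a,'b) monoid_scheme \<Rightarrow> nat \<Rightarrow> (nat \<Rightarrow> 'a) \<Rightarrow> (nat \<Rightarrow> 'a) \<Rightarrow> 'a" where
  "conj_prod G n t g = foldr (\<lambda>i acc. (inv\<^bsub>G\<^esub> g i \<otimes>\<^bsub>G\<^esub> t i \<otimes>\<^bsub>G\<^esub> g i) \<otimes>\<^bsub>G\<^esub> acc) [1..<n+1] \<one>\<^bsub>G\<^esub>"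

end

theory Submission
  imports Defs
begin

locale afp =
  fixes G :: "('a,'b) monoid_scheme" (structure) and I :: "'i set" and H :: "'i \<Rightarrow> 'a set" and C :: "'a set"
  assumes afp: "amalg_free_product G I H C"
begin

lemma grp: "group G" using afp unfolding amalg_free_product_def by blast

sublocale group G by (rule grp)

lemma subC: "subgroup C G" using afp unfolding amalg_free_product_def by blast
lemma subH: "i \<in> I \<Longrightarrow> subgroup (H i) G" using afp unfolding amalg_free_product_def by blast
lemma CH: "i \<in> I \<Longrightarrow> C \<subseteq> H i" using afp unfolding amalg_free_product_def by blast
lemma HHC: "i \<in> I \<Longrightarrow> j \<in> I \<Longrightarrow> i \<noteq> j \<Longrightarrow> H i \<inter> H j = C" using afp unfolding amalg_free_product_def by blast
lemma gen: "generate G (\<Union>i\<in>I. H i) = carrier G" using afp unfolding amalg_free_product_def by blast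
lemma NF: "ws \<noteq> [] \<Longrightarrow> alt_word G I H C ws \<Longrightarrow> word_prod G ws \<notin> C"
  using afp unfolding amalg_free_product_def by blast

abbreviation "alt \<equiv> alt_word G I H C"
abbreviation "prd \<equiv> word_prod G"
abbreviation "len \<equiv> amalg_len G I H C"

lemma C_carr: "c \<in> C \<Longrightarrow> c \<in> carrier G" using subgroup.subset[OF subC] by blast
lemma H_carr: "i \<in> I \<Longrightarrow> x \<in> H i \<Longrightarrow> x \<in> carrier G" using subgroup.subset[OF subH] by blast
lemma C_mult: "a \<in> C \<Longrightarrow> b \<in> C \<Longrightarrow> a \<otimes> b \<in> C" by (rule subgroup.m_closed[OF subC])
lemma C_inv: "a \<in> C \<Longrightarrow> inv a \<in> C" by (rule subgroup.m_inv_closed[OF subC])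
lemma C_one: "\<one> \<in> C" by (rule subgroup.one_closed[OF subC])
lemma H_mult: "i \<in> I \<Longrightarrow> a \<in> H i \<Longrightarrow> b \<in> H i \<Longrightarrow> a \<otimes> b \<in> H i" by (rule subgroup.m_closed[OF subH])
lemma H_inv: "i \<in> I \<Longrightarrow> a \<in> H i \<Longrightarrow> inv a \<in> H i" by (rule subgroup.m_inv_closed[OF subH])
lemma H_one: "i \<in> I \<Longrightarrow> \<one> \<in> H i" by (rule subgroup.one_closed[OF subH])
lemma CH': "i \<in> I \<Longrightarrow> c \<in> C \<Longrightarrow> c \<in> H i" using CH by blast

lemma C_cancel_l: "a \<in> C \<Longrightarrow> b \<in> carrier G \<Longrightarrow> (a \<otimes> b \<in> C) = (b \<in> C)"
proof
  assume "a \<in> C" "b \<in> carrier G" "a \<otimes> b \<in> C"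
  then have "inv a \<otimes> (a \<otimes> b) \<in> C" using C_mult C_inv by blast
  then show "b \<in> C" using \<open>a \<in> C\<close> \<open>b \<in> carrier G\<close> C_carr by (simp add: m_assoc[symmetric])
qed (simp add: C_mult)

lemma C_cancel_r: "a \<in> C \<Longrightarrow> b \<in> carrier G \<Longrightarrow> (b \<otimes> a \<in> C) = (b \<in> C)"
proof
  assume "a \<in> C" "b \<in> carrier G" "b \<otimes> a \<in> C"
  then have "(b \<otimes> a) \<otimes> inv a \<in> C" using C_mult C_inv by blast
  then show "b \<in> C" using \<open>a \<in> C\<close> \<open>b \<in> carrier G\<close> C_carr by (simp add: m_assoc)
qed (simp add: C_mult)

lemma inv_cancel1 [simp]: "x \<in> carrier G \<Longrightarrow> y \<in> carrier G \<Longrightarrow> x \<otimes> (inv x \<otimes> y) = y"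
  by (simp add: m_assoc[symmetric])
lemma inv_cancel2 [simp]: "x \<in> carrier G \<Longrightarrow> y \<in> carrier G \<Longrightarrow> inv x \<otimes> (x \<otimes> y) = y"
  by (simp add: m_assoc[symmetric])

lemma alt_Nil [simp]: "alt []" by (simp add: alt_word_def)

lemma alt_Cons: "alt (p # ws) \<longleftrightarrow> fst p \<in> I \<and> snd p \<in> H (fst p) - C \<and> alt ws \<and>
   (ws \<noteq> [] \<longrightarrow> fst p \<noteq> fst (hd ws))"
  unfolding alt_word_def
  apply (cases ws)
   apply simp
  apply (auto simp: nth_Cons split: nat.splits)
  done

lemma alt_append: "alt (xs @ ys) \<longleftrightarrow> alt xs \<and> alt ys \<and>
   (xs \<noteq> [] \<longrightarrow> ys \<noteq> [] \<longrightarrow> fst (last xs) \<noteq> fst (hd ys))"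
  by (induction xs) (auto simp: alt_Cons)

lemma alt_single [simp]: "alt [(i,x)] \<longleftrightarrow> i \<in> I \<and> x \<in> H i - C"
  by (simp add: alt_Cons)

lemma prd_Nil [simp]: "prd [] = \<one>" by (simp add: word_prod_def)
lemma prd_Cons [simp]: "prd (p # ws) = snd p \<otimes> prd ws" by (simp add: word_prod_def)

definition valid :: "('i \<times> 'a) list \<Rightarrow> bool" where
  "valid ws \<longleftrightarrow> (\<forall>p\<in>set ws. fst p \<in> I \<and> snd p \<in> H (fst p))"

lemma valid_Nil [simp]: "valid []" by (simp add: valid_def)
lemma valid_Cons [simp]: "valid (p # ws) = (fst p \<in> I \<and> snd p \<in> H (fst p) \<and> valid ws)"
  by (auto simp: valid_def)

lemma alt_valid: "alt ws \<Longrightarrow> valid ws" unfolding alt_word_def valid_def by blast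

lemma prd_carr: "valid ws \<Longrightarrow> prd ws \<in> carrier G"
  by (induction ws) (auto simp: valid_def H_carr)

lemma prd_carr_alt [simp]: "alt ws \<Longrightarrow> prd ws \<in> carrier G"
  using alt_valid prd_carr by blast

lemma valid_append [simp]: "valid (xs @ ys) = (valid xs \<and> valid ys)"
  by (auto simp: valid_def)

lemma prd_append: "valid xs \<Longrightarrow> valid ys \<Longrightarrow> prd (xs @ ys) = prd xs \<otimes> prd ys"
  by (induction xs) (auto simp: valid_def H_carr prd_carr m_assoc)

lemma prd_append_alt: "alt (xs @ ys) \<Longrightarrow> prd (xs @ ys) = prd xs \<otimes> prd ys"
  using prd_append alt_valid valid_append by blast

definition winv :: "('i \<times> 'a) list \<Rightarrow> ('i \<times> 'a) list" where
  "winv ws = rev (map (\<lambda>p. (fst p, inv (snd p))) ws)"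

lemma winv_Nil [simp]: "winv [] = []" by (simp add: winv_def)
lemma winv_Cons [simp]: "winv (p # ws) = winv ws @ [(fst p, inv (snd p))]" by (simp add: winv_def)
lemma winv_append [simp]: "winv (xs @ ys) = winv ys @ winv xs" by (simp add: winv_def)
lemma winv_length [simp]: "length (winv ws) = length ws" by (simp add: winv_def)
lemma winv_Nil_iff [simp]: "(winv ws = []) = (ws = [])" by (simp add: winv_def)

lemma valid_winv: "valid ws \<Longrightarrow> valid (winv ws)"
  by (auto simp: valid_def winv_def H_inv)

lemma inv_C_iff: "x \<in> carrier G \<Longrightarrow> (inv x \<in> C) = (x \<in> C)"
  by (metis C_inv inv_inv)

lemma prd_winv: "valid ws \<Longrightarrow> prd (winv ws) = inv (prd ws)"
proof (induction ws)
  case (Cons p ws)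
  then have v: "valid ws" "fst p \<in> I" "snd p \<in> H (fst p)" by (auto simp: valid_def)
  have v2: "valid [(fst p, inv (snd p))]" using v by (simp add: valid_def H_inv)
  have "prd (winv (p # ws)) = prd (winv ws) \<otimes> prd [(fst p, inv (snd p))]"
    using prd_append[OF valid_winv[OF v(1)] v2] by simp
  also have "\<dots> = inv (prd ws) \<otimes> inv (snd p)" using v Cons by (simp add: H_inv H_carr)
  also have "\<dots> = inv (prd (p # ws))" using v by (simp add: inv_mult_group H_carr prd_carr)
  finally show ?case .
qed simp

lemma last_winv: "ws \<noteq> [] \<Longrightarrow> fst (last (winv ws)) = fst (hd ws)"
  by (cases ws) auto
lemma hd_winv: "ws \<noteq> [] \<Longrightarrow> fst (hd (winv ws)) = fst (last ws)"
  by (induction ws) auto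

lemma alt_winv: "alt ws \<Longrightarrow> alt (winv ws)"
proof (induction ws)
  case (Cons p ws)
  then have a: "alt ws" "fst p \<in> I" "snd p \<in> H (fst p)" "snd p \<notin> C"
      "ws \<noteq> [] \<longrightarrow> fst p \<noteq> fst (hd ws)" by (auto simp: alt_Cons)
  then have "inv (snd p) \<notin> C" using inv_C_iff H_carr by blast
  then show ?case using a Cons by (auto simp: alt_append H_inv last_winv)
qed simp


definition push :: "('i \<times> 'a) \<Rightarrow> 'a \<times> ('i \<times> 'a) list \<Rightarrow> 'a \<times> ('i \<times> 'a) list" where
  "push p cw = (case cw of (c, w) \<Rightarrow> (case w of [] \<Rightarrow>
       (if snd p \<otimes> c \<in> C then (snd p \<otimes> c, []) else (\<one>, [(fst p, snd p \<otimes> c)]))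
     | q # v \<Rightarrow> (if fst p = fst q then
          (if snd p \<otimes> c \<otimes> snd q \<in> C then (snd p \<otimes> c \<otimes> snd q, v)
           else (\<one>, (fst p, snd p \<otimes> c \<otimes> snd q) # v))
        else if snd p \<in> C then (\<one>, (fst q, snd p \<otimes> c \<otimes> snd q) # v)
        else (\<one>, p # (fst q, c \<otimes> snd q) # v))))"

lemma push_ok:
  assumes p: "fst p \<in> I" "snd p \<in> H (fst p)" and c: "c \<in> C" and w: "alt w"
    and r: "push p (c, w) = (c', w')"
  shows "c' \<in> C \<and> alt w' \<and> snd p \<otimes> (c \<otimes> prd w) = c' \<otimes> prd w' \<and>
     length w \<le> length w' + 1 \<and> length w' \<le> length w + 1"
proof (cases w)
  case Nil
  have x: "snd p \<otimes> c \<in> H (fst p)" using p c by (simp add: H_mult CH')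
  then show ?thesis using r p c Nil
    by (auto simp: push_def H_carr C_carr C_one split: if_splits)
next
  case (Cons q v)
  obtain i x where pq: "p = (i, x)" by (cases p)
  obtain j y where qq: "q = (j, y)" by (cases q)
  have j: "j \<in> I" "y \<in> H j" "y \<notin> C" "alt v" "v \<noteq> [] \<longrightarrow> j \<noteq> fst (hd v)"
    using w Cons qq by (auto simp: alt_Cons)
  have i: "i \<in> I" "x \<in> H i" using p pq by auto
  have cr: "x \<in> carrier G" "c \<in> carrier G" "y \<in> carrier G" "prd v \<in> carrier G"
    using i j c by (auto simp: H_carr C_carr)
  show ?thesis
  proof (cases "i = j")
    case True
    have z: "x \<otimes> c \<otimes> y \<in> H i" using True i j c by (simp add: H_mult CH')
    have e: "x \<otimes> (c \<otimes> (y \<otimes> prd v)) = x \<otimes> c \<otimes> y \<otimes> prd v" using cr by (simp add: m_assoc)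
    show ?thesis
    proof (cases "x \<otimes> c \<otimes> y \<in> C")
      case True
      then show ?thesis using r Cons pq qq \<open>i = j\<close> j e cr by (auto simp: push_def)
    next
      case False
      then show ?thesis using r Cons pq qq \<open>i = j\<close> j e cr z C_one
        by (auto simp: push_def alt_Cons)
    qed
  next
    case False
    show ?thesis
    proof (cases "x \<in> C")
      case True
      have z: "x \<otimes> c \<otimes> y \<in> H j" using True i j c by (simp add: H_mult CH')
      have zc: "x \<otimes> c \<otimes> y \<notin> C" using True c j cr C_cancel_l C_mult by simp
      have e: "x \<otimes> (c \<otimes> (y \<otimes> prd v)) = x \<otimes> c \<otimes> y \<otimes> prd v" using cr by (simp add: m_assoc)
      show ?thesis using r Cons pq qq \<open>i \<noteq> j\<close> True j e cr z zc C_one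
        by (auto simp: push_def alt_Cons)
    next
      case False
      have z: "c \<otimes> y \<in> H j" using i j c by (simp add: H_mult CH')
      have zc: "c \<otimes> y \<notin> C" using c j cr C_cancel_l by simp
      show ?thesis using r Cons pq qq \<open>i \<noteq> j\<close> False i j cr z zc C_one
        by (auto simp: push_def alt_Cons m_assoc)
    qed
  qed
qed

definition nf :: "('i \<times> 'a) list \<Rightarrow> 'a \<times> ('i \<times> 'a) list" where
  "nf ls = foldr push ls (\<one>, [])"

lemma nf_Nil [simp]: "nf [] = (\<one>, [])" by (simp add: nf_def)
lemma nf_Cons: "nf (p # ls) = push p (nf ls)" by (simp add: nf_def)

lemma nf_ok: "valid ls \<Longrightarrow> fst (nf ls) \<in> C \<and> alt (snd (nf ls)) \<and>
   prd ls = fst (nf ls) \<otimes> prd (snd (nf ls)) \<and> length (snd (nf ls)) \<le> length ls"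
proof (induction ls)
  case Nil
  then show ?case by (simp add: C_one)
next
  case (Cons p ls)
  then have v: "valid ls" "fst p \<in> I" "snd p \<in> H (fst p)" by (auto simp: valid_def)
  obtain c w where cw: "nf ls = (c, w)" by (cases "nf ls")
  obtain c' w' where cw': "push p (c, w) = (c', w')" by (cases "push p (c, w)")
  have ih: "c \<in> C" "alt w" "prd ls = c \<otimes> prd w" "length w \<le> length ls"
    using Cons.IH v cw by auto
  from push_ok[OF v(2,3) ih(1,2) cw'] ih
  show ?case by (auto simp: nf_Cons cw cw')
qed

lemma nf_len_ge: "valid (xs @ ys) \<Longrightarrow> length (snd (nf ys)) \<le> length (snd (nf (xs @ ys))) + length xs"
proof (induction xs)
  case (Cons p xs)
  then have v: "valid (xs @ ys)" "fst p \<in> I" "snd p \<in> H (fst p)" by (auto simp: valid_def)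
  obtain c w where cw: "nf (xs @ ys) = (c, w)" by (cases "nf (xs @ ys)")
  obtain c' w' where cw': "push p (c, w) = (c', w')" by (cases "push p (c, w)")
  have "c \<in> C" "alt w" using nf_ok[OF v(1)] cw by auto
  from push_ok[OF v(2,3) this cw'] Cons.IH[OF v(1)] cw
  show ?case by (simp add: nf_Cons cw')
qed simp

lemma nf_alt: "alt w \<Longrightarrow> nf w = (\<one>, w)"
proof (induction w)
  case (Cons p w)
  then have a: "alt w" "fst p \<in> I" "snd p \<in> H (fst p)" "snd p \<notin> C"
      "w \<noteq> [] \<longrightarrow> fst p \<noteq> fst (hd w)" by (auto simp: alt_Cons)
  have x: "snd p \<in> carrier G" using a H_carr by blast
  show ?case
  proof (cases w)
    case Nil
    then show ?thesis using a x by (simp add: nf_Cons push_def)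
  next
    case (Cons q v)
    have "snd q \<in> carrier G" using a Cons H_carr by (auto simp: alt_Cons)
    then show ?thesis using a x Cons Cons.IH[OF a(1)] by (simp add: nf_Cons push_def)
  qed
qed simp

lemma gen_valid: "g \<in> generate G (\<Union>i\<in>I. H i) \<Longrightarrow> \<exists>ls. valid ls \<and> g = prd ls"
proof (induction rule: generate.induct)
  case one
  then show ?case by (rule exI[of _ "[]"]) (simp add: valid_def)
next
  case (incl h)
  then obtain i where "i \<in> I" "h \<in> H i" by blast
  then show ?case by (intro exI[of _ "[(i, h)]"]) (simp add: valid_def H_carr)
next
  case (inv h)
  then obtain i where "i \<in> I" "h \<in> H i" by blast
  then show ?case by (intro exI[of _ "[(i, inv h)]"]) (simp add: valid_def H_carr H_inv)
next
  case (eng h1 h2)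
  then obtain l1 l2 where "valid l1" "h1 = prd l1" "valid l2" "h2 = prd l2" by blast
  then show ?case by (intro exI[of _ "l1 @ l2"]) (simp add: prd_append)
qed

lemma rep_exists: "g \<in> carrier G \<Longrightarrow> \<exists>c\<in>C. \<exists>w. alt w \<and> g = c \<otimes> prd w"
proof -
  assume "g \<in> carrier G"
  then obtain ls where "valid ls" "g = prd ls" using gen gen_valid by blast
  then show ?thesis using nf_ok by blast
qed

lemma absorb_l: "alt v \<Longrightarrow> v \<noteq> [] \<Longrightarrow> e \<in> C \<Longrightarrow>
   \<exists>v'. alt v' \<and> length v' = length v \<and> prd v' = e \<otimes> prd v \<and> map fst v' = map fst v"
proof -
  assume a: "alt v" "v \<noteq> []" "e \<in> C"
  then obtain q u where v: "v = q # u" by (cases v) auto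
  have q: "fst q \<in> I" "snd q \<in> H (fst q)" "snd q \<notin> C" "alt u" "u \<noteq> [] \<longrightarrow> fst q \<noteq> fst (hd u)"
    using a v by (auto simp: alt_Cons)
  have z: "e \<otimes> snd q \<in> H (fst q)" "e \<otimes> snd q \<notin> C"
    using q a C_cancel_l H_carr by (auto simp: H_mult CH')
  show ?thesis
    apply (rule exI[of _ "(fst q, e \<otimes> snd q) # u"])
    using q z v a by (auto simp: alt_Cons m_assoc C_carr H_carr)
qed

lemma absorb_r: "alt v \<Longrightarrow> v \<noteq> [] \<Longrightarrow> e \<in> C \<Longrightarrow>
   \<exists>v'. alt v' \<and> length v' = length v \<and> prd v' = prd v \<otimes> e \<and> map fst v' = map fst v"
proof -
  assume a: "alt v" "v \<noteq> []" "e \<in> C"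
  then obtain q u where v: "v = u @ [q]" by (cases v rule: rev_cases) auto
  have q: "fst q \<in> I" "snd q \<in> H (fst q)" "snd q \<notin> C" "alt u" "u \<noteq> [] \<longrightarrow> fst (last u) \<noteq> fst q"
    using a v by (auto simp: alt_append alt_Cons hd_append)
  have z: "snd q \<otimes> e \<in> H (fst q)" "snd q \<otimes> e \<notin> C"
    using q a C_cancel_r H_carr by (auto simp: H_mult CH')
  have "alt (u @ [(fst q, snd q \<otimes> e)])" using q z by (auto simp: alt_append)
  moreover have "prd (u @ [(fst q, snd q \<otimes> e)]) = prd v \<otimes> e"
    using prd_append_alt[OF calculation] prd_append_alt a v q C_carr H_carr by (simp add: m_assoc)
  ultimately show ?thesis using v by (intro exI[of _ "u @ [(fst q, snd q \<otimes> e)]"]) auto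
qed

lemma LB: assumes "alt w" "alt v" "e \<in> C" "prd w = e \<otimes> prd v" shows "length w \<le> length v"
proof (cases "v = []")
  case True
  then have "prd w \<in> C" using assms C_carr by simp
  then have "w = []" using NF assms by blast
  then show ?thesis by simp
next
  case False
  obtain v' where v': "alt v'" "length v' = length v" "prd v' = e \<otimes> prd v"
    using absorb_l[OF assms(2) False assms(3)] by blast
  show ?thesis
  proof (rule ccontr)
    assume "\<not> ?thesis"
    then have lt: "length v' < length w" using v' by simp
    have val: "valid (winv v' @ w)" using v' assms alt_valid valid_winv by simp
    have "length (snd (nf w)) \<le> length (snd (nf (winv v' @ w))) + length (winv v')"
      using nf_len_ge[OF val] .
    then have ne: "snd (nf (winv v' @ w)) \<noteq> []" using nf_alt[OF assms(1)] lt by auto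
    have "prd (winv v' @ w) = \<one>" using val v' assms
      by (simp add: prd_append valid_winv alt_valid prd_winv C_carr)
    then have "\<one> = fst (nf (winv v' @ w)) \<otimes> prd (snd (nf (winv v' @ w)))"
      using nf_ok[OF val] by simp
    then have "prd (snd (nf (winv v' @ w))) = inv (fst (nf (winv v' @ w)))"
    proof -
      let ?a = "fst (nf (winv v' @ w))" and ?b = "prd (snd (nf (winv v' @ w)))"
      assume e1: "\<one> = ?a \<otimes> ?b"
      have ab: "?a \<in> carrier G" "?b \<in> carrier G" using nf_ok[OF val] C_carr by auto
      have "?b = inv ?a \<otimes> (?a \<otimes> ?b)" using ab by (rule inv_cancel2[symmetric])
      also have "\<dots> = inv ?a" using ab by (simp add: e1[symmetric])
      finally show ?thesis .
    qed
    then have "prd (snd (nf (winv v' @ w))) \<in> C" using nf_ok[OF val] C_inv by simp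
    then show False using NF ne nf_ok[OF val] by blast
  qed
qed

lemma len_eq0: assumes "c \<in> C" "alt w" shows "len (c \<otimes> prd w) = length w"
  unfolding amalg_len_def
proof (rule Least_equality)
  show "\<exists>c'\<in>C. \<exists>ws. alt ws \<and> length ws = length w \<and> c \<otimes> prd w = c' \<otimes> prd ws"
    using assms by blast
next
  fix m assume "\<exists>c'\<in>C. \<exists>ws. alt ws \<and> length ws = m \<and> c \<otimes> prd w = c' \<otimes> prd ws"
  then obtain c' ws where h: "c' \<in> C" "alt ws" "length ws = m" "c \<otimes> prd w = c' \<otimes> prd ws" by blast
  have cc: "c \<in> carrier G" "c' \<in> carrier G" using h assms C_carr by auto
  have "prd w = inv c \<otimes> (c \<otimes> prd w)" using cc assms by (simp only: inv_cancel2 prd_carr_alt)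
  also have "\<dots> = (inv c \<otimes> c') \<otimes> prd ws" using h cc by (simp add: m_assoc)
  finally have "prd w = (inv c \<otimes> c') \<otimes> prd ws" .
  then show "length w \<le> m" using LB[OF assms(2) h(2)] h assms C_mult C_inv by blast
qed

lemma len_eq: assumes "c \<in> C" "alt w" "c' \<in> C" shows "len (c \<otimes> prd w \<otimes> c') = length w"
proof (cases "w = []")
  case True
  then show ?thesis using len_eq0[of "c \<otimes> c'" "[]"] assms C_mult C_carr by simp
next
  case False
  obtain w' where "alt w'" "length w' = length w" "prd w' = prd w \<otimes> c'"
    using absorb_r[OF assms(2) False assms(3)] by blast
  then show ?thesis using len_eq0[OF assms(1), of w'] assms C_carr by (simp add: m_assoc)
qed

lemma len_single: "i \<in> I \<Longrightarrow> x \<in> H i - C \<Longrightarrow> len x = 1"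
  using len_eq0[of \<one> "[(i,x)]"] C_one H_carr by simp

lemma len_C: "x \<in> C \<Longrightarrow> len x = 0"
  using len_eq0[of x "[]"] C_carr by simp

lemma len_valid_le: "valid ls \<Longrightarrow> len (prd ls) \<le> length ls"
  using nf_ok[of ls] len_eq0 by metis


lemma prd_snoc: "alt (xs @ [p]) \<Longrightarrow> prd (xs @ [p]) = prd xs \<otimes> snd p"
proof -
  assume a: "alt (xs @ [p])"
  then have "snd p \<in> carrier G" by (auto simp: alt_append alt_Cons H_carr)
  then show ?thesis using prd_append_alt[OF a] by simp
qed

lemma lf: assumes "c \<in> C" "c' \<in> C" "alt (w1 @ w2)" "g = c \<otimes> prd (w1 @ w2) \<otimes> c'"
  shows "left_factor G I H C (c \<otimes> prd w1) g"
proof -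
  have a: "alt w1" "alt w2" using assms(3) by (auto simp: alt_append)
  have cc: "c \<in> carrier G" "c' \<in> carrier G" using assms C_carr by auto
  have e: "g = (c \<otimes> prd w1) \<otimes> (prd w2 \<otimes> c')"
    using assms a cc by (simp add: prd_append_alt m_assoc)
  have "len g = length w1 + length w2" using len_eq[OF assms(1,3,2)] assms(4) by simp
  moreover have "len (c \<otimes> prd w1) = length w1" using len_eq0 a assms by simp
  moreover have "len (prd w2 \<otimes> c') = length w2" using len_eq[OF C_one a(2) assms(2)] a by simp
  ultimately show ?thesis unfolding left_factor_def using e a cc by auto
qed

lemma rf: assumes "c \<in> C" "c' \<in> C" "alt (w1 @ w2)" "g = c \<otimes> prd (w1 @ w2) \<otimes> c'"
  shows "right_factor G I H C (prd w2 \<otimes> c') g"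
proof -
  have a: "alt w1" "alt w2" using assms(3) by (auto simp: alt_append)
  have cc: "c \<in> carrier G" "c' \<in> carrier G" using assms C_carr by auto
  have e: "g = (c \<otimes> prd w1) \<otimes> (prd w2 \<otimes> c')"
    using assms a cc by (simp add: prd_append_alt m_assoc)
  have "len g = length w1 + length w2" using len_eq[OF assms(1,3,2)] assms(4) by simp
  moreover have "len (c \<otimes> prd w1) = length w1" using len_eq0 a assms by simp
  moreover have "len (prd w2 \<otimes> c') = length w2" using len_eq[OF C_one a(2) assms(2)] a by simp
  ultimately show ?thesis unfolding right_factor_def using e a cc by auto
qed

lemma canc: "alt w \<Longrightarrow> alt v \<Longrightarrow> e \<in> C \<Longrightarrow> \<exists>\<alpha> \<mu> \<beta> \<nu>. w = \<alpha> @ \<mu> \<and> v = \<beta> @ \<nu> \<and>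
   prd \<mu> \<otimes> e \<otimes> inv (prd \<nu>) \<in> C \<and>
   (\<alpha> \<noteq> [] \<longrightarrow> \<beta> \<noteq> [] \<longrightarrow> fst (last \<alpha>) \<noteq> fst (last \<beta>) \<or>
      snd (last \<alpha>) \<otimes> (prd \<mu> \<otimes> e \<otimes> inv (prd \<nu>)) \<otimes> inv (snd (last \<beta>)) \<notin> C)"
proof (induction w arbitrary: v e rule: rev_induct)
  case Nil
  then show ?case by (intro exI[of _ "[]"] exI[of _ v]) (simp add: C_carr)
next
  case (snoc p w0)
  show ?case
  proof (cases v rule: rev_cases)
    case Nil
    then show ?thesis using snoc.prems
      by (intro exI[of _ "w0 @ [p]"] exI[of _ "[]"]) (simp add: C_carr)
  next
    case (snoc v0 q)
    have ap: "alt w0" "fst p \<in> I" "snd p \<in> H (fst p)" using snoc.prems(1)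
      by (auto simp: alt_append alt_Cons hd_append)
    have aq: "alt v0" "fst q \<in> I" "snd q \<in> H (fst q)" using snoc.prems(2) snoc
      by (auto simp: alt_append alt_Cons hd_append)
    have cr: "snd p \<in> carrier G" "snd q \<in> carrier G" "e \<in> carrier G"
      using ap aq snoc.prems H_carr C_carr by auto
    show ?thesis
    proof (cases "fst p \<noteq> fst q \<or> snd p \<otimes> e \<otimes> inv (snd q) \<notin> C")
      case True
      then show ?thesis using snoc.prems snoc cr
        by (intro exI[of _ "w0 @ [p]"] exI[of _ "[]"] exI[of _ v]) (auto simp: C_carr m_assoc)
    next
      case False
      then have e': "snd p \<otimes> e \<otimes> inv (snd q) \<in> C" by simp
      obtain \<alpha> \<mu> \<beta> \<nu> where ih: "w0 = \<alpha> @ \<mu>" "v0 = \<beta> @ \<nu>"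
        "prd \<mu> \<otimes> (snd p \<otimes> e \<otimes> inv (snd q)) \<otimes> inv (prd \<nu>) \<in> C"
        "\<alpha> \<noteq> [] \<longrightarrow> \<beta> \<noteq> [] \<longrightarrow> fst (last \<alpha>) \<noteq> fst (last \<beta>) \<or>
          snd (last \<alpha>) \<otimes> (prd \<mu> \<otimes> (snd p \<otimes> e \<otimes> inv (snd q)) \<otimes> inv (prd \<nu>)) \<otimes> inv (snd (last \<beta>)) \<notin> C"
        using snoc.IH[OF ap(1) aq(1) e'] by blast
      have am: "alt (\<mu> @ [p])" using snoc.prems(1) ih by (auto simp: alt_append)
      have an: "alt (\<nu> @ [q])" using snoc.prems(2) snoc ih by (auto simp: alt_append)
      have cm: "prd \<mu> \<in> carrier G" "prd \<nu> \<in> carrier G" using am an by (auto simp: alt_append)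
      have eq: "prd (\<mu> @ [p]) \<otimes> e \<otimes> inv (prd (\<nu> @ [q])) =
          prd \<mu> \<otimes> (snd p \<otimes> e \<otimes> inv (snd q)) \<otimes> inv (prd \<nu>)"
        using prd_snoc[OF am] prd_snoc[OF an] cm cr by (simp add: inv_mult_group m_assoc)
      show ?thesis
        apply (rule exI[of _ \<alpha>], rule exI[of _ "\<mu> @ [p]"], rule exI[of _ \<beta>], rule exI[of _ "\<nu> @ [q]"])
        using ih eq snoc by simp
    qed
  qed
qed


lemma len_inv: "c \<in> C \<Longrightarrow> alt w \<Longrightarrow> len (inv (c \<otimes> prd w)) = length w"
proof -
  assume a: "c \<in> C" "alt w"
  have "inv (c \<otimes> prd w) = \<one> \<otimes> prd (winv w) \<otimes> inv c"
    using a C_carr by (simp add: inv_mult_group prd_winv alt_valid)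
  then show ?thesis using len_eq[OF C_one alt_winv[OF a(2)] C_inv[OF a(1)]] by simp
qed

lemma foldr_mult: "(\<forall>i\<in>set xs. s i \<in> carrier G) \<Longrightarrow> a \<in> carrier G \<Longrightarrow>
   foldr (\<lambda>i acc. s i \<otimes> acc) xs a = foldr (\<lambda>i acc. s i \<otimes> acc) xs \<one> \<otimes> a \<and>
   foldr (\<lambda>i acc. s i \<otimes> acc) xs \<one> \<in> carrier G"
  by (induction xs) (auto simp: m_assoc)

context
  fixes n :: nat and t g :: "nat \<Rightarrow> 'a"
  assumes n1: "n \<ge> 1" and carr: "\<forall>i\<in>{1..n}. t i \<in> carrier G \<and> g i \<in> carrier G"
    and tm: "tamed G I H C n t g"
begin

definition fac :: "nat \<Rightarrow> 'i" where "fac k = (SOME j. j \<in> I \<and> t k \<in> H j - C)"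

lemma tfac: assumes "k \<in> {1..n}" shows "fac k \<in> I \<and> t k \<in> H (fac k) - C"
proof -
  have l1: "len (t k) = 1" using tm assms unfolding tamed_def by blast
  obtain c w where cw: "c \<in> C" "alt w" "t k = c \<otimes> prd w" using rep_exists carr assms by blast
  then have "length w = 1" using l1 len_eq0 by simp
  then obtain j x where w: "w = [(j, x)]" by (cases w) (auto simp: length_Suc_conv)
  then have jx: "j \<in> I" "x \<in> H j" "x \<notin> C" using cw by auto
  have "t k = c \<otimes> x" using cw w jx H_carr by simp
  then have "t k \<in> H j - C" using jx cw C_cancel_l H_carr by (simp add: H_mult CH')
  then have "\<exists>j. j \<in> I \<and> t k \<in> H j - C" using jx by blast
  then show ?thesis unfolding fac_def by (rule someI_ex)
qed

lemma tcarr: "k \<in> {1..n} \<Longrightarrow> t k \<in> carrier G" using carr by blast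
lemma gcarr: "k \<in> {1..n} \<Longrightarrow> g k \<in> carrier G" using carr by blast

lemma first_ne:
  assumes k: "k \<in> {1..n}" and cw: "c \<in> C" "alt w" "g k = c \<otimes> prd w" and ne: "w \<noteq> []"
  shows "fst (hd w) \<noteq> fac k"
proof
  assume eq: "fst (hd w) = fac k"
  obtain m y w0 where w: "w = (m, y) # w0" using ne by (cases w) auto
  have a: "m \<in> I" "y \<in> H m" "y \<notin> C" "alt w0" using cw w by (auto simp: alt_Cons)
  have mf: "m = fac k" using eq w by simp
  have tk: "t k \<in> H m" using tfac[OF k] mf by simp
  have cr: "y \<in> carrier G" "c \<in> carrier G" "t k \<in> carrier G" "prd w0 \<in> carrier G"
    using a cw tk H_carr C_carr by auto
  define z where "z = inv y \<otimes> inv c \<otimes> t k \<otimes> c \<otimes> y"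
  have zH: "z \<in> H m" unfolding z_def using a tk cw
    by (simp add: H_mult H_inv CH')
  have v1: "valid (winv w0)" "valid w0" using a alt_valid valid_winv by auto
  have v2: "valid [(m, z)]" using a zH by (simp add: valid_def)
  have v: "valid (winv w0 @ [(m, z)] @ w0)" using v1 v2 by simp
  have "inv (g k) \<otimes> t k \<otimes> g k = prd (winv w0 @ [(m, z)] @ w0)"
    using cr cw w a zH H_carr v1 v2
    by (simp add: prd_append prd_winv z_def inv_mult_group m_assoc)
  then have "len (inv (g k) \<otimes> t k \<otimes> g k) \<le> 2 * length w0 + 1"
    using len_valid_le[OF v] by simp
  moreover have "len (inv (g k) \<otimes> t k \<otimes> g k) = len (inv (g k)) + len (t k) + len (g k)"
    "len (t k) = 1" using tm k unfolding tamed_def by blast+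
  moreover have "len (g k) = length w" using cw len_eq0 by simp
  moreover have "len (inv (g k)) = length w" using cw len_inv by simp
  ultimately show False using w by simp
qed

lemma diff_fac: assumes k: "k \<in> {1..<n}" and c: "g k \<otimes> inv (g (Suc k)) \<in> C"
  shows "fac k \<noteq> fac (Suc k)"
proof
  assume e: "fac k = fac (Suc k)"
  have "len (g k \<otimes> inv (g (Suc k))) = 0" using len_C c by blast
  then have l2: "len (t k \<otimes> t (Suc k)) = 2" using tm k unfolding tamed_def by simp
  have k1: "k \<in> {1..n}" "Suc k \<in> {1..n}" using k by auto
  have h: "t k \<otimes> t (Suc k) \<in> H (fac k)" using tfac[OF k1(1)] tfac[OF k1(2)] e by (simp add: H_mult)
  show False
  proof (cases "t k \<otimes> t (Suc k) \<in> C")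
    case True then show False using len_C l2 by simp
  next
    case False then show False using len_single[of "fac k"] h tfac[OF k1(1)] l2 by simp
  qed
qed

definition Pk :: "nat \<Rightarrow> 'a" where
  "Pk k = foldr (\<lambda>i acc. (inv (g i) \<otimes> t i \<otimes> g i) \<otimes> acc) [1..<k+1] \<one>"

lemma Pk_carr: "k \<le> n \<Longrightarrow> Pk k \<in> carrier G"
  unfolding Pk_def using foldr_mult[of "[1..<k+1]" "\<lambda>i. inv (g i) \<otimes> t i \<otimes> g i" \<one>] carr
  by auto

lemma Pk_Suc: "k < n \<Longrightarrow> Pk (Suc k) = Pk k \<otimes> (inv (g (Suc k)) \<otimes> t (Suc k) \<otimes> g (Suc k))"
proof -
  assume k: "k < n"
  let ?s = "\<lambda>i. inv (g i) \<otimes> t i \<otimes> g i"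
  have c: "?s (Suc k) \<in> carrier G" using carr k by auto
  have "Pk (Suc k) = foldr (\<lambda>i acc. ?s i \<otimes> acc) [1..<k+1] (?s (Suc k) \<otimes> \<one>)"
    unfolding Pk_def by simp
  also have "\<dots> = Pk k \<otimes> (?s (Suc k) \<otimes> \<one>)"
    unfolding Pk_def using foldr_mult[of "[1..<k+1]" ?s "?s (Suc k) \<otimes> \<one>"] carr k c by auto
  finally show ?thesis using c by simp
qed

lemma Pk_n: "conj_prod G n t g = Pk n" unfolding conj_prod_def Pk_def by simp

definition INV :: "nat \<Rightarrow> bool" where
  "INV k \<longleftrightarrow> (\<exists>q0 r. alt q0 \<and> (q0 \<noteq> [] \<longrightarrow> fst (last q0) \<noteq> fac k) \<and> r \<in> H (fac k) \<and>
     r \<otimes> t k \<notin> C \<and>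
     (r \<in> C \<or> (\<exists>R. right_factor G I H C R (ext_seq G n g (k - 1)) \<and> r = R \<otimes> inv (g k))) \<and>
     len (g 1) + k \<le> length q0 + 1 \<and> Pk k = prd q0 \<otimes> r \<otimes> t k \<otimes> g k)"

lemma INV_1: "INV 1"
proof -
  have k: "1 \<in> {1..n}" using n1 by simp
  obtain c w where cw: "c \<in> C" "alt w" "g 1 = c \<otimes> prd w" using rep_exists gcarr[OF k] by blast
  have cr: "c \<in> carrier G" "prd w \<in> carrier G" "t 1 \<in> carrier G" using cw tcarr[OF k] C_carr by auto
  have f: "fac 1 \<in> I" "t 1 \<in> H (fac 1) - C" using tfac[OF k] by auto
  show ?thesis unfolding INV_def
  proof (intro exI conjI)
    show "alt (winv w)" using alt_winv cw by simp
    show "winv w \<noteq> [] \<longrightarrow> fst (last (winv w)) \<noteq> fac 1"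
      using first_ne[OF k cw] last_winv by auto
    show "inv c \<in> H (fac 1)" using cw f C_inv CH' by simp
    show "inv c \<otimes> t 1 \<notin> C" using cw f C_inv C_cancel_l cr by simp
    show "inv c \<in> C \<or> (\<exists>R. right_factor G I H C R (ext_seq G n g (1 - 1)) \<and> inv c = R \<otimes> inv (g 1))"
      using C_inv cw by simp
    show "len (g 1) + 1 \<le> length (winv w) + 1" using len_eq0 cw by simp
    show "Pk 1 = prd (winv w) \<otimes> inv c \<otimes> t 1 \<otimes> g 1"
      unfolding Pk_def using cw cr gcarr[OF k]
      by (simp add: prd_winv alt_valid inv_mult_group m_assoc)
  qed
qed

lemma INV_final: assumes "INV n" shows "len (Pk n) \<ge> len (g 1) + n + len (g n)"
proof -
  have k: "n \<in> {1..n}" using n1 by simp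
  obtain q0 r where q: "alt q0" "q0 \<noteq> [] \<longrightarrow> fst (last q0) \<noteq> fac n" "r \<in> H (fac n)"
    "r \<otimes> t n \<notin> C" "len (g 1) + n \<le> length q0 + 1" "Pk n = prd q0 \<otimes> r \<otimes> t n \<otimes> g n"
    using assms unfolding INV_def by blast
  obtain c w where cw: "c \<in> C" "alt w" "g n = c \<otimes> prd w" using rep_exists gcarr[OF k] by blast
  have f: "fac n \<in> I" "t n \<in> H (fac n) - C" using tfac[OF k] by auto
  have cr: "c \<in> carrier G" "prd w \<in> carrier G" "t n \<in> carrier G" "r \<in> carrier G"
    using cw tcarr[OF k] C_carr q f H_carr by auto
  let ?z = "r \<otimes> t n \<otimes> c"
  have z: "?z \<in> H (fac n)" "?z \<notin> C" using q f cw cr C_cancel_r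
    by (auto simp: H_mult CH')
  have a: "alt (q0 @ [(fac n, ?z)] @ w)"
    using q z f cw first_ne[OF k cw] by (auto simp: alt_append alt_Cons hd_append)
  have "Pk n = \<one> \<otimes> prd (q0 @ [(fac n, ?z)] @ w) \<otimes> \<one>"
    using q cw cr a prd_append_alt[OF a] prd_append_alt[of "[(fac n, ?z)]" w] a
    by (simp add: alt_append m_assoc)
  then have "len (Pk n) = length q0 + 1 + length w" using len_eq[OF C_one a C_one] by simp
  moreover have "len (g n) = length w" using cw len_eq0 by simp
  ultimately show ?thesis using q by simp
qed


lemma ext_in: "1 \<le> k \<Longrightarrow> k \<le> n \<Longrightarrow> ext_seq G n f k = f k"
  by (simp add: ext_seq_def)

lemma noc:
  assumes k: "k \<in> {1..n}"
  shows "right_factor G I H C R (ext_seq G n g (k - 1)) \<Longrightarrow> R \<otimes> inv (g k) \<otimes> t k \<notin> C"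
    and "left_factor G I H C L (inv (ext_seq G n g (k + 1))) \<Longrightarrow> t k \<otimes> g k \<otimes> L \<notin> C"
    and "right_factor G I H C R (ext_seq G n g (k - 1)) \<Longrightarrow> left_factor G I H C L (inv (ext_seq G n g (k + 1)))
         \<Longrightarrow> R \<otimes> inv (g k) \<otimes> t k \<otimes> g k \<otimes> L \<notin> C"
proof -
  have "\<not> cancellable G I H C n t g k" using tm k unfolding tamed_def by blast
  moreover have "ext_seq G n g k = g k" "ext_seq G n t k = t k" using k by (auto simp: ext_seq_def)
  ultimately have nc: "\<not> ((\<exists>R. right_factor G I H C R (ext_seq G n g (k - 1)) \<and> R \<otimes> inv (g k) \<otimes> t k \<in> C) \<or>
     (\<exists>L. left_factor G I H C L (inv (ext_seq G n g (k + 1))) \<and> t k \<otimes> g k \<otimes> L \<in> C) \<or>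
     (\<exists>R L. right_factor G I H C R (ext_seq G n g (k - 1)) \<and> left_factor G I H C L (inv (ext_seq G n g (k + 1))) \<and>
        R \<otimes> inv (g k) \<otimes> t k \<otimes> g k \<otimes> L \<in> C))"
    unfolding cancellable_def Let_def by simp
  show "right_factor G I H C R (ext_seq G n g (k - 1)) \<Longrightarrow> R \<otimes> inv (g k) \<otimes> t k \<notin> C" using nc by blast
  show "left_factor G I H C L (inv (ext_seq G n g (k + 1))) \<Longrightarrow> t k \<otimes> g k \<otimes> L \<notin> C" using nc by blast
  show "right_factor G I H C R (ext_seq G n g (k - 1)) \<Longrightarrow> left_factor G I H C L (inv (ext_seq G n g (k + 1)))
         \<Longrightarrow> R \<otimes> inv (g k) \<otimes> t k \<otimes> g k \<otimes> L \<notin> C" using nc by blast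
qed

lemma rf_carr: "right_factor G I H C R x \<Longrightarrow> R \<in> carrier G" by (simp add: right_factor_def)

lemma INV_step: assumes k1: "1 \<le> k" "k < n" and iv: "INV k" shows "INV (Suc k)"
proof -
  have kn: "k \<in> {1..n}" "Suc k \<in> {1..n}" "k \<in> {1..<n}" using k1 by auto
  define j where "j = fac k"
  define j' where "j' = fac (Suc k)"
  obtain q0 r where q: "alt q0" "q0 \<noteq> [] \<longrightarrow> fst (last q0) \<noteq> j" "r \<in> H j"
    "r \<otimes> t k \<notin> C" "len (g 1) + k \<le> length q0 + 1" "Pk k = prd q0 \<otimes> r \<otimes> t k \<otimes> g k"
    and rc: "r \<in> C \<or> (\<exists>R. right_factor G I H C R (ext_seq G n g (k - 1)) \<and> r = R \<otimes> inv (g k))"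
    using iv unfolding INV_def j_def by blast
  obtain ck w where cw: "ck \<in> C" "alt w" "g k = ck \<otimes> prd w" using rep_exists gcarr[OF kn(1)] by blast
  obtain ck1 v where cv: "ck1 \<in> C" "alt v" "g (Suc k) = ck1 \<otimes> prd v" using rep_exists gcarr[OF kn(2)] by blast
  obtain \<alpha> \<mu> \<beta> \<nu> where ca: "w = \<alpha> @ \<mu>" "v = \<beta> @ \<nu>" "prd \<mu> \<otimes> \<one> \<otimes> inv (prd \<nu>) \<in> C"
    "\<alpha> \<noteq> [] \<longrightarrow> \<beta> \<noteq> [] \<longrightarrow> fst (last \<alpha>) \<noteq> fst (last \<beta>) \<or>
      snd (last \<alpha>) \<otimes> (prd \<mu> \<otimes> \<one> \<otimes> inv (prd \<nu>)) \<otimes> inv (snd (last \<beta>)) \<notin> C"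
    using canc[OF cw(2) cv(2) C_one] by blast
  have aa: "alt \<alpha>" "alt \<mu>" "alt \<beta>" "alt \<nu>" using ca cw cv by (auto simp: alt_append)
  have pc: "prd \<alpha> \<in> carrier G" "prd \<mu> \<in> carrier G" "prd \<beta> \<in> carrier G" "prd \<nu> \<in> carrier G"
    "prd q0 \<in> carrier G" using aa q by auto
  have va: "valid \<alpha>" "valid \<mu>" "valid \<beta>" "valid \<nu>" "valid q0" using aa q alt_valid by auto
  define d where "d = prd \<mu> \<otimes> inv (prd \<nu>)"
  have dC: "d \<in> C" using ca pc unfolding d_def by simp
  have junc: "\<alpha> \<noteq> [] \<longrightarrow> \<beta> \<noteq> [] \<longrightarrow> fst (last \<alpha>) \<noteq> fst (last \<beta>) \<or>
      snd (last \<alpha>) \<otimes> d \<otimes> inv (snd (last \<beta>)) \<notin> C" using ca pc unfolding d_def by simp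
  have fj: "j \<in> I" "t k \<in> H j" "t k \<notin> C" using tfac[OF kn(1)] unfolding j_def by auto
  have fj': "j' \<in> I" "t (Suc k) \<in> H j'" "t (Suc k) \<notin> C" using tfac[OF kn(2)] unfolding j'_def by auto
  have cr: "ck \<in> carrier G" "ck1 \<in> carrier G" "d \<in> carrier G" "r \<in> carrier G"
    "t k \<in> carrier G" "t (Suc k) \<in> carrier G" "g k \<in> carrier G" "g (Suc k) \<in> carrier G"
    using cw cv dC q fj fj' C_carr H_carr gcarr kn by auto
  define T where "T = r \<otimes> t k \<otimes> ck"
  have TH: "T \<in> H j" "T \<notin> C" unfolding T_def using q fj cw cr C_cancel_r
    by (auto simp: H_mult CH')
  have Tc: "T \<in> carrier G" using TH fj H_carr by blast
  have hda: "\<alpha> \<noteq> [] \<Longrightarrow> fst (hd \<alpha>) \<noteq> j"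
    using first_ne[OF kn(1) cw] ca unfolding j_def by auto
  have hdb: "\<beta> \<noteq> [] \<Longrightarrow> fst (hd \<beta>) \<noteq> j'"
    using first_ne[OF kn(2) cv] ca unfolding j'_def by auto
  define Xp where "Xp = prd q0 \<otimes> T \<otimes> prd \<alpha> \<otimes> d \<otimes> prd (winv \<beta>) \<otimes> inv ck1"
  have ginv: "inv (g (Suc k)) = inv (prd \<nu>) \<otimes> prd (winv \<beta>) \<otimes> inv ck1"
    using cv ca pc cr va by (simp add: prd_append inv_mult_group prd_winv m_assoc)
  have gg: "g k \<otimes> inv (g (Suc k)) = ck \<otimes> prd \<alpha> \<otimes> d \<otimes> prd (winv \<beta>) \<otimes> inv ck1"
    unfolding ginv d_def using cw ca pc cr va prd_carr valid_winv
    by (simp add: prd_append m_assoc)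
  have EQ: "Pk (Suc k) = Xp \<otimes> t (Suc k) \<otimes> g (Suc k)"
  proof -
    have "Pk (Suc k) = prd q0 \<otimes> r \<otimes> t k \<otimes> (g k \<otimes> inv (g (Suc k))) \<otimes> t (Suc k) \<otimes> g (Suc k)"
      using Pk_Suc[OF k1(2)] q cr pc by (simp add: m_assoc)
    also have "\<dots> = Xp \<otimes> t (Suc k) \<otimes> g (Suc k)"
      unfolding gg Xp_def T_def using cr pc prd_carr valid_winv va by (simp add: m_assoc)
    finally show ?thesis .
  qed
  have concl: "INV (Suc k)" if h: "alt q0'" "q0' \<noteq> [] \<longrightarrow> fst (last q0') \<noteq> j'" "r' \<in> H j'"
     "r' \<otimes> t (Suc k) \<notin> C"
     "r' \<in> C \<or> (\<exists>R. right_factor G I H C R (g k) \<and> r' = R \<otimes> inv (g (Suc k)))"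
     "length q0 + 1 \<le> length q0'" "prd q0' \<otimes> r' = Xp" for q0' r'
  proof -
    have e: "ext_seq G n g (Suc k - 1) = g k" using kn by (simp add: ext_seq_def)
    have rc': "r' \<in> carrier G" using h fj' H_carr by blast
    have "Pk (Suc k) = prd q0' \<otimes> r' \<otimes> t (Suc k) \<otimes> g (Suc k)" using EQ h(7) by simp
    then show ?thesis unfolding INV_def j'_def[symmetric] e using h q(5)
      by (intro exI[of _ q0'] exI[of _ r']) auto
  qed
  show ?thesis
  proof (cases "\<alpha> = []")
    case aN: True
    show ?thesis
    proof (cases "\<beta> = []")
      case bN: True
      have "g k \<otimes> inv (g (Suc k)) \<in> C" using gg aN bN cw cv dC cr
        by (simp add: C_mult C_inv)
      then have jj: "j \<noteq> j'" using diff_fac[OF kn(3)] unfolding j_def j'_def by blast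
      let ?z = "T \<otimes> d \<otimes> inv ck1"
      have z: "?z \<in> H j" "?z \<notin> C" using TH dC cv fj Tc cr C_cancel_r
        by (auto simp: H_mult CH' C_inv C_mult)
      show ?thesis
      proof (rule concl[of "q0 @ [(j, ?z)]" \<one>])
        show "alt (q0 @ [(j, ?z)])" using q z fj by (auto simp: alt_append)
        show "q0 @ [(j, ?z)] \<noteq> [] \<longrightarrow> fst (last (q0 @ [(j, ?z)])) \<noteq> j'" using jj by simp
        show "\<one> \<in> H j'" using H_one fj' by simp
        show "\<one> \<otimes> t (Suc k) \<notin> C" using fj' cr by simp
        show "\<one> \<in> C \<or> (\<exists>R. right_factor G I H C R (g k) \<and> \<one> = R \<otimes> inv (g (Suc k)))" using C_one by simp
        show "length q0 + 1 \<le> length (q0 @ [(j, ?z)])" by simp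
        have "prd (q0 @ [(j, ?z)]) = prd q0 \<otimes> ?z" using va z fj by (simp add: prd_append H_carr)
        then show "prd (q0 @ [(j, ?z)]) \<otimes> \<one> = Xp"
          unfolding Xp_def using aN bN pc Tc cr z fj H_carr by (simp add: m_assoc)
      qed
    next
      case bne: False
      then obtain \<beta>0 m' y where b: "\<beta> = \<beta>0 @ [(m', y)]" by (cases \<beta> rule: rev_cases) auto
      have byy: "m' \<in> I" "y \<in> H m'" "y \<notin> C" "alt \<beta>0" "\<beta>0 \<noteq> [] \<longrightarrow> fst (last \<beta>0) \<noteq> m'"
        using aa b by (auto simp: alt_append alt_Cons hd_append)
      have hb: "\<beta>0 = [] \<longrightarrow> m' \<noteq> j'" "\<beta>0 \<noteq> [] \<longrightarrow> fst (hd \<beta>0) \<noteq> j'" using hdb bne b by auto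
      have yc: "y \<in> carrier G" "prd \<beta>0 \<in> carrier G" "prd (winv \<beta>0) \<in> carrier G"
        using byy H_carr alt_winv by auto
      have wb: "winv \<beta> = (m', inv y) # winv \<beta>0" using b by simp
      have awb: "alt (winv \<beta>0)" using byy alt_winv by simp
      have pwb: "prd (winv \<beta>) = inv y \<otimes> prd (winv \<beta>0)" using wb by simp
      have iy: "inv y \<in> H m'" "inv y \<notin> C" using byy H_inv inv_C_iff yc by auto
      have wb0: "winv \<beta>0 \<noteq> [] \<longrightarrow> fst (hd (winv \<beta>0)) \<noteq> m'" "winv \<beta>0 \<noteq> [] \<longrightarrow> fst (last (winv \<beta>0)) \<noteq> j'"
        using byy hb hd_winv last_winv by auto
      show ?thesis
      proof (cases "m' = j")
        case False
        let ?z = "T \<otimes> d"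
        have z: "?z \<in> H j" "?z \<notin> C" using TH dC fj Tc cr C_cancel_r
          by (auto simp: H_mult CH')
        show ?thesis
        proof (rule concl[of "q0 @ (j, ?z) # (m', inv y) # winv \<beta>0" "inv ck1"])
          show "alt (q0 @ (j, ?z) # (m', inv y) # winv \<beta>0)"
            using q z fj False byy iy awb wb0 by (auto simp: alt_append alt_Cons hd_append)
          show "q0 @ (j, ?z) # (m', inv y) # winv \<beta>0 \<noteq> [] \<longrightarrow>
                fst (last (q0 @ (j, ?z) # (m', inv y) # winv \<beta>0)) \<noteq> j'"
            using hb wb0 by auto
          show "inv ck1 \<in> H j'" using cv fj' C_inv CH' by simp
          show "inv ck1 \<otimes> t (Suc k) \<notin> C" using cv fj' cr C_inv C_cancel_l by simp
          show "inv ck1 \<in> C \<or> (\<exists>R. right_factor G I H C R (g k) \<and> inv ck1 = R \<otimes> inv (g (Suc k)))" using cv C_inv by simp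
          show "length q0 + 1 \<le> length (q0 @ (j, ?z) # (m', inv y) # winv \<beta>0)" by simp
          show "prd (q0 @ (j, ?z) # (m', inv y) # winv \<beta>0) \<otimes> inv ck1 = Xp"
            unfolding Xp_def using aN pwb va awb alt_valid[OF awb] z iy byy fj Tc cr yc pc
            by (simp add: prd_append m_assoc H_carr)
        qed
      next
        case True
        let ?z = "T \<otimes> d \<otimes> inv y"
        have zH: "?z \<in> H j" using TH dC fj iy True by (simp add: H_mult CH')
        have winv_v: "winv v = (winv \<nu> @ [(m', inv y)]) @ winv \<beta>0" using ca b by simp
        have av: "alt ((winv \<nu> @ [(m', inv y)]) @ winv \<beta>0)" using alt_winv[OF cv(2)] winv_v by simp
        have ig: "inv (g (Suc k)) = \<one> \<otimes> prd ((winv \<nu> @ [(m', inv y)]) @ winv \<beta>0) \<otimes> inv ck1"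
          using cv winv_v[symmetric] cr C_carr by (simp add: inv_mult_group prd_winv alt_valid)
        have L: "left_factor G I H C (\<one> \<otimes> prd (winv \<nu> @ [(m', inv y)])) (inv (g (Suc k)))"
          using lf[OF C_one C_inv[OF cv(1)] av ig] .
        have e1: "ext_seq G n g (k + 1) = g (Suc k)" using kn by (simp add: ext_seq_def)
        have pL: "\<one> \<otimes> prd (winv \<nu> @ [(m', inv y)]) = inv (prd \<nu>) \<otimes> inv y"
          using va valid_winv iy byy prd_winv yc pc by (simp add: prd_append H_carr)
        have tgL: "t k \<otimes> g k \<otimes> (\<one> \<otimes> prd (winv \<nu> @ [(m', inv y)])) = t k \<otimes> ck \<otimes> d \<otimes> inv y"
          unfolding pL d_def using cw ca aN cr pc yc by (simp add: m_assoc)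
        have zn: "?z \<notin> C"
        proof
          assume zc: "?z \<in> C"
          have zeq: "?z = r \<otimes> (t k \<otimes> g k \<otimes> (\<one> \<otimes> prd (winv \<nu> @ [(m', inv y)])))"
            unfolding tgL T_def using cr yc by (simp add: m_assoc)
          from rc show False
          proof
            assume "r \<in> C"
            then have "t k \<otimes> g k \<otimes> (\<one> \<otimes> prd (winv \<nu> @ [(m', inv y)])) \<in> C"
              using zc zeq C_cancel_l cr pc yc by (metis m_closed inv_closed pL)
            then show False using noc(2)[OF kn(1)] L e1 by simp
          next
            assume "\<exists>R. right_factor G I H C R (ext_seq G n g (k - 1)) \<and> r = R \<otimes> inv (g k)"
            then obtain R where R: "right_factor G I H C R (ext_seq G n g (k - 1))" "r = R \<otimes> inv (g k)" by blast
            have Rc: "R \<in> carrier G" using R rf_carr by blast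
            have req: "R \<otimes> inv (g k) \<otimes> t k \<otimes> g k \<otimes> (\<one> \<otimes> prd (winv \<nu> @ [(m', inv y)])) = ?z"
              unfolding zeq R(2) using Rc cr pc yc pL by (simp add: m_assoc)
            have L': "left_factor G I H C (\<one> \<otimes> prd (winv \<nu> @ [(m', inv y)])) (inv (ext_seq G n g (k + 1)))"
              using L e1 by simp
            have "R \<otimes> inv (g k) \<otimes> t k \<otimes> g k \<otimes> (\<one> \<otimes> prd (winv \<nu> @ [(m', inv y)])) \<notin> C"
              by (rule noc(3)[OF kn(1) R(1) L'])
            then show False using zc unfolding req by blast
          qed
        qed
        show ?thesis
        proof (rule concl[of "q0 @ (j, ?z) # winv \<beta>0" "inv ck1"])
          show "alt (q0 @ (j, ?z) # winv \<beta>0)"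
            using q zH zn fj True awb wb0 by (auto simp: alt_append alt_Cons hd_append)
          show "q0 @ (j, ?z) # winv \<beta>0 \<noteq> [] \<longrightarrow> fst (last (q0 @ (j, ?z) # winv \<beta>0)) \<noteq> j'"
            using hb wb0 True by auto
          show "inv ck1 \<in> H j'" using cv fj' C_inv CH' by simp
          show "inv ck1 \<otimes> t (Suc k) \<notin> C" using cv fj' cr C_inv C_cancel_l by simp
          show "inv ck1 \<in> C \<or> (\<exists>R. right_factor G I H C R (g k) \<and> inv ck1 = R \<otimes> inv (g (Suc k)))" using cv C_inv by simp
          show "length q0 + 1 \<le> length (q0 @ (j, ?z) # winv \<beta>0)" by simp
          show "prd (q0 @ (j, ?z) # winv \<beta>0) \<otimes> inv ck1 = Xp"
            unfolding Xp_def using aN pwb va awb alt_valid[OF awb] iy fj Tc cr yc pc zH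
            by (simp add: prd_append m_assoc H_carr)
        qed
      qed
    qed
  next
    case ane: False
    then obtain \<alpha>0 m x where a: "\<alpha> = \<alpha>0 @ [(m, x)]" by (cases \<alpha> rule: rev_cases) auto
    have ax: "m \<in> I" "x \<in> H m" "x \<notin> C" "alt \<alpha>0" "\<alpha>0 \<noteq> [] \<longrightarrow> fst (last \<alpha>0) \<noteq> m"
      using aa a by (auto simp: alt_append alt_Cons hd_append)
    have ha: "\<alpha>0 = [] \<longrightarrow> m \<noteq> j" "\<alpha>0 \<noteq> [] \<longrightarrow> fst (hd \<alpha>0) \<noteq> j" using hda ane a by auto
    have xc: "x \<in> carrier G" "prd \<alpha>0 \<in> carrier G" using ax H_carr by auto
    have pa: "prd \<alpha> = prd \<alpha>0 \<otimes> x" using prd_snoc aa a by simp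
    have va0: "valid \<alpha>0" using ax alt_valid by simp
    show ?thesis
    proof (cases "\<beta> = []")
      case bN: True
      show ?thesis
      proof (cases "m = j'")
        case False
        show ?thesis
        proof (rule concl[of "q0 @ (j, T) # \<alpha>0 @ [(m, x)]" "d \<otimes> inv ck1"])
          show "alt (q0 @ (j, T) # \<alpha>0 @ [(m, x)])"
            using q TH fj ax ha by (auto simp: alt_append alt_Cons hd_append)
          show "q0 @ (j, T) # \<alpha>0 @ [(m, x)] \<noteq> [] \<longrightarrow> fst (last (q0 @ (j, T) # \<alpha>0 @ [(m, x)])) \<noteq> j'"
            using False by simp
          show "d \<otimes> inv ck1 \<in> H j'" using cv dC fj' by (simp add: C_inv C_mult CH')
          show "d \<otimes> inv ck1 \<otimes> t (Suc k) \<notin> C" using cv dC fj' cr C_cancel_l by (simp add: C_inv C_mult)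
          show "d \<otimes> inv ck1 \<in> C \<or> (\<exists>R. right_factor G I H C R (g k) \<and> d \<otimes> inv ck1 = R \<otimes> inv (g (Suc k)))" using cv dC by (simp add: C_inv C_mult)
          show "length q0 + 1 \<le> length (q0 @ (j, T) # \<alpha>0 @ [(m, x)])" by simp
          show "prd (q0 @ (j, T) # \<alpha>0 @ [(m, x)]) \<otimes> (d \<otimes> inv ck1) = Xp"
            unfolding Xp_def using bN pa va va0 ax fj TH Tc cr xc pc
            by (simp add: prd_append m_assoc)
        qed
      next
        case True
        let ?r = "x \<otimes> d \<otimes> inv ck1"
        have rH: "?r \<in> H j'" using True ax dC cv fj' by (simp add: H_mult C_inv CH')
        have gk: "g k = ck \<otimes> prd (\<alpha>0 @ ((m, x) # \<mu>)) \<otimes> \<one>" using cw ca a cr by simp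
        have aw: "alt (\<alpha>0 @ ((m, x) # \<mu>))" using cw ca a by simp
        have RF: "right_factor G I H C (prd ((m, x) # \<mu>) \<otimes> \<one>) (g k)"
          using rf[OF cw(1) C_one aw gk] .
        have Req: "(prd ((m, x) # \<mu>) \<otimes> \<one>) \<otimes> inv (g (Suc k)) = ?r"
          unfolding ginv d_def using bN xc pc cr by (simp add: m_assoc)
        have e0: "ext_seq G n g (Suc k - 1) = g k" using kn by (simp add: ext_seq_def)
        have rn: "?r \<otimes> t (Suc k) \<notin> C" using noc(1)[OF kn(2), of "prd ((m, x) # \<mu>) \<otimes> \<one>"] RF e0 Req by simp
        show ?thesis
        proof (rule concl[of "q0 @ (j, T) # \<alpha>0" ?r])
          show "alt (q0 @ (j, T) # \<alpha>0)"
            using q TH fj ax ha by (auto simp: alt_append alt_Cons hd_append)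
          show "q0 @ (j, T) # \<alpha>0 \<noteq> [] \<longrightarrow> fst (last (q0 @ (j, T) # \<alpha>0)) \<noteq> j'"
            using True ax ha by auto
          show "?r \<in> H j'" by (rule rH)
          show "?r \<otimes> t (Suc k) \<notin> C" by (rule rn)
          show "?r \<in> C \<or> (\<exists>R. right_factor G I H C R (g k) \<and> ?r = R \<otimes> inv (g (Suc k)))"
            using RF Req[symmetric] by blast
          show "length q0 + 1 \<le> length (q0 @ (j, T) # \<alpha>0)" by simp
          show "prd (q0 @ (j, T) # \<alpha>0) \<otimes> ?r = Xp"
            unfolding Xp_def using bN pa va va0 ax fj TH Tc cr xc pc
            by (simp add: prd_append m_assoc)
        qed
      qed
    next
      case bne: False
      then obtain \<beta>0 m' y where b: "\<beta> = \<beta>0 @ [(m', y)]" by (cases \<beta> rule: rev_cases) auto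
      have byy: "m' \<in> I" "y \<in> H m'" "y \<notin> C" "alt \<beta>0" "\<beta>0 \<noteq> [] \<longrightarrow> fst (last \<beta>0) \<noteq> m'"
        using aa b by (auto simp: alt_append alt_Cons hd_append)
      have hb: "\<beta>0 = [] \<longrightarrow> m' \<noteq> j'" "\<beta>0 \<noteq> [] \<longrightarrow> fst (hd \<beta>0) \<noteq> j'" using hdb bne b by auto
      have yc: "y \<in> carrier G" "prd (winv \<beta>0) \<in> carrier G"
        using byy H_carr alt_winv by auto
      have wb: "winv \<beta> = (m', inv y) # winv \<beta>0" using b by simp
      have awb: "alt (winv \<beta>0)" using byy alt_winv by simp
      have pwb: "prd (winv \<beta>) = inv y \<otimes> prd (winv \<beta>0)" using wb by simp
      have iy: "inv y \<in> H m'" "inv y \<notin> C" using byy H_inv inv_C_iff yc by auto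
      have wb0: "winv \<beta>0 \<noteq> [] \<longrightarrow> fst (hd (winv \<beta>0)) \<noteq> m'" "winv \<beta>0 \<noteq> [] \<longrightarrow> fst (last (winv \<beta>0)) \<noteq> j'"
        using byy hb hd_winv last_winv by auto
      have jn: "fst (last \<alpha>) \<noteq> fst (last \<beta>) \<or> snd (last \<alpha>) \<otimes> d \<otimes> inv (snd (last \<beta>)) \<notin> C"
        using junc ane bne by blast
      show ?thesis
      proof (cases "m = m'")
        case False
        let ?x = "x \<otimes> d"
        have xz: "?x \<in> H m" "?x \<notin> C" using ax dC xc C_cancel_r by (auto simp: H_mult CH')
        let ?q = "q0 @ (j, T) # \<alpha>0 @ (m, ?x) # (m', inv y) # winv \<beta>0"
        show ?thesis
        proof (rule concl[of ?q "inv ck1"])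
          show "alt ?q"
            using q TH fj ax ha xz iy byy awb wb0 False by (auto simp: alt_append alt_Cons hd_append)
          show "?q \<noteq> [] \<longrightarrow> fst (last ?q) \<noteq> j'" using hb wb0 by auto
          show "inv ck1 \<in> H j'" using cv fj' C_inv CH' by simp
          show "inv ck1 \<otimes> t (Suc k) \<notin> C" using cv fj' cr C_inv C_cancel_l by simp
          show "inv ck1 \<in> C \<or> (\<exists>R. right_factor G I H C R (g k) \<and> inv ck1 = R \<otimes> inv (g (Suc k)))" using cv C_inv by simp
          show "length q0 + 1 \<le> length ?q" by simp
          show "prd ?q \<otimes> inv ck1 = Xp"
            unfolding Xp_def using pa pwb va va0 ax fj TH Tc cr xc pc yc iy byy awb alt_valid[OF awb] dC xz
            by (simp add: prd_append m_assoc H_carr)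
        qed
      next
        case True
        let ?x = "x \<otimes> d \<otimes> inv y"
        have xz: "?x \<in> H m" "?x \<notin> C" using ax dC iy True jn a b by (auto simp: H_mult CH')
        let ?q = "q0 @ (j, T) # \<alpha>0 @ (m, ?x) # winv \<beta>0"
        show ?thesis
        proof (rule concl[of ?q "inv ck1"])
          show "alt ?q"
            using q TH fj ax ha xz byy awb wb0 True by (auto simp: alt_append alt_Cons hd_append)
          show "?q \<noteq> [] \<longrightarrow> fst (last ?q) \<noteq> j'" using hb wb0 True by auto
          show "inv ck1 \<in> H j'" using cv fj' C_inv CH' by simp
          show "inv ck1 \<otimes> t (Suc k) \<notin> C" using cv fj' cr C_inv C_cancel_l by simp
          show "inv ck1 \<in> C \<or> (\<exists>R. right_factor G I H C R (g k) \<and> inv ck1 = R \<otimes> inv (g (Suc k)))" using cv C_inv by simp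
          show "length q0 + 1 \<le> length ?q" using ane bne a b by simp
          show "prd ?q \<otimes> inv ck1 = Xp"
            unfolding Xp_def using pa pwb va va0 ax fj TH Tc cr xc pc yc iy byy awb alt_valid[OF awb] dC xz
            by (simp add: prd_append m_assoc H_carr)
        qed
      qed
    qed
  qed
qed

lemma INV_all: "1 \<le> k \<Longrightarrow> k \<le> n \<Longrightarrow> INV k"
proof (induction k)
  case 0 then show ?case by simp
next
  case (Suc k)
  show ?case
  proof (cases "k = 0")
    case True then show ?thesis using INV_1 by simp
  next
    case False then show ?thesis using Suc INV_step by simp
  qed
qed

lemma main: "len (conj_prod G n t g) \<ge> len (g 1) + n + len (g n)"
  using INV_final INV_all n1 Pk_n by simp

end

end

theorem mainTheorem18:
  fixes G :: "('a,'b) monoid_scheme" and I :: "'i set" and H :: "'i \<Rightarrow> 'a set" and C :: "'a set"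
    and n :: nat and t g :: "nat \<Rightarrow> 'a"
  assumes "amalg_free_product G I H C"
    and "n \<ge> 1"
    and "\<forall>i\<in>{1..n}. t i \<in> carrier G \<and> g i \<in> carrier G"
    and "tamed G I H C n t g"
  shows "amalg_len G I H C (conj_prod G n t g) \<ge>
           amalg_len G I H C (g 1) + n + amalg_len G I H C (g n)"
proof -
  interpret afp G I H C by (rule afp.intro) (rule assms(1))
  show ?thesis using main[OF assms(2-4)] .
qed

end
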